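(* Let $G$ be a second countable locally compact abelian group, $\Lambda\subset G$ a uniform lattice, $\widehat G$ the dual group of $G$, and $\Gamma\subset\widehat G$ the annihilator of $\Lambda$. Let $\Omega\subset\widehat G$ be a measurable set of positive, finite Haar measure and let $\ell$ be a positive integer. If for some $a_1,\dots,a_\ell\in G$ the collection $E_\Lambda(a_1,\dots,a_\ell)=\{e_{a_j+\lambda}: j=1,\dots,\ell,\ \lambda\in\Lambda\}$ (restricted to $\Omega$) is a frame for $L^2(\Omega)$, then $(\Omega,\Gamma)$ is an $m$-subtiling pair of $\widehat G$ for some positive integer $m\le \ell$.
   Context: A uniform lattice is a discrete, co-compact subgroup. The annihilator of $\Lambda$ is $\Gamma=\{\gamma\in\widehat G: e_\lambda(\gamma)=1\ \forall\lambda\in\Lambda\}$, where for $g\in G$ and a character $\omega\in\widehat G$ we write $e_g(\omega)=\omega(g)$. For a lattice $\Gamma\subset\widehat G$ and $\omega\in\widehat G$, set $F_{\Omega,\Gamma}(\omega)=\sum_{\gamma\in\Gamma}\chi_\Omega(\omega+\gamma)$. The pair $(\Omega,\Gamma)$ is an $m$-subtiling pair (sub-multitiling pair) of $\widehat G$ if $\operatorname{ess\,sup}_{\omega\in\widehat G}F_{\Omega,\Gamma}(\omega)=m$. A family $\{\phi_j\}_{j\in J}$ in a Hilbert space $\mathbb H$ is a frame if there are $0<A\le B<\infty$ with $A\|f\|^2\le\sum_j|\langle f,\phi_j\rangle|^2\le B\|f\|^2$ for all $f\in\mathbb H$. *)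

theory Defs
  imports "HOL-Analysis.Analysis" "HOL-Probability.Essential_Supremum"
begin

text \<open>Second countable locally compact (Hausdorff) abelian topological group: the type class
  part is imposed on the type, local compactness is stated with the library notion.\<close>

definition lca_group :: "'a::{topological_ab_group_add, t2_space, second_countable_topology} itself \<Rightarrow> bool" where
  "lca_group _ \<longleftrightarrow> locally_compact_space (euclidean :: 'a topology)"

definition is_character :: "('a::{topological_ab_group_add} \<Rightarrow> complex) \<Rightarrow> bool" where
  "is_character \<psi> \<longleftrightarrow> continuous_on UNIV \<psi> \<and> (\<forall>a. cmod (\<psi> a) = 1)
      \<and> (\<forall>a b. \<psi> (a + b) = \<psi> a * \<psi> b)"

text \<open>The pairing e :: G => Ghat => complex, e g w = w(g), exhibits the topological group
  Ghat as the dual group of G: every element of Ghat is a continuous character, the group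
  operation is pointwise multiplication, every continuous character arises from exactly one
  element of Ghat, and the topology of Ghat is the compact-open topology (uniform convergence
  on compact sets).\<close>

definition is_dual_pairing ::
  "('a::topological_ab_group_add \<Rightarrow> 'b::topological_ab_group_add \<Rightarrow> complex) \<Rightarrow> bool" where
  "is_dual_pairing e \<longleftrightarrow>
     (\<forall>w. is_character (\<lambda>g. e g w)) \<and>
     (\<forall>g w v. e g (w + v) = e g w * e g v) \<and>
     (\<forall>\<psi>. is_character \<psi> \<longrightarrow> (\<exists>!w. \<psi> = (\<lambda>g. e g w))) \<and>
     (\<forall>U :: 'b set. open U \<longleftrightarrow>
        (\<forall>w0\<in>U. \<exists>K \<epsilon>. compact K \<and> \<epsilon> > 0 \<and>
            {w. \<forall>g\<in>K. cmod (e g w - e g w0) < \<epsilon>} \<subseteq> U))"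

text \<open>Haar measure on a second countable LCA group (regularity is automatic for locally finite
  Borel measures on second countable locally compact Hausdorff spaces).\<close>

definition is_haar_measure :: "'b::topological_ab_group_add measure \<Rightarrow> bool" where
  "is_haar_measure \<mu> \<longleftrightarrow> sets \<mu> = sets borel \<and> emeasure \<mu> UNIV \<noteq> 0 \<and>
     (\<forall>K. compact K \<longrightarrow> emeasure \<mu> K < \<infinity>) \<and>
     (\<forall>A\<in>sets borel. \<forall>x. emeasure \<mu> ((\<lambda>y. x + y) ` A) = emeasure \<mu> A)"

definition uniform_lattice :: "'a::topological_ab_group_add set \<Rightarrow> bool" where
  "uniform_lattice \<Lambda> \<longleftrightarrow>
     0 \<in> \<Lambda> \<and> (\<forall>x\<in>\<Lambda>. \<forall>y\<in>\<Lambda>. x - y \<in> \<Lambda>) \<and>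
     (\<forall>x\<in>\<Lambda>. \<exists>U. open U \<and> U \<inter> \<Lambda> = {x}) \<and>
     (\<exists>K. compact K \<and> {k + l | k l. k \<in> K \<and> l \<in> \<Lambda>} = UNIV)"

definition annihilator ::
  "('a \<Rightarrow> 'b \<Rightarrow> complex) \<Rightarrow> 'a set \<Rightarrow> 'b set" where
  "annihilator e \<Lambda> = {\<gamma>. \<forall>l\<in>\<Lambda>. e l \<gamma> = 1}"

definition F_count :: "'b::plus set \<Rightarrow> 'b set \<Rightarrow> 'b \<Rightarrow> ennreal" where
  "F_count \<Omega> \<Gamma> w = (\<integral>\<^sup>+ \<gamma>. indicator \<Omega> (w + \<gamma>) \<partial>count_space \<Gamma>)"

definition subtiling_pair :: "'b::plus measure \<Rightarrow> nat \<Rightarrow> 'b set \<Rightarrow> 'b set \<Rightarrow> bool" where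
  "subtiling_pair \<mu> m \<Omega> \<Gamma> \<longleftrightarrow> esssup \<mu> (F_count \<Omega> \<Gamma>) = of_nat m"

definition L2_normsq :: "'b measure \<Rightarrow> 'b set \<Rightarrow> ('b \<Rightarrow> complex) \<Rightarrow> ennreal" where
  "L2_normsq \<mu> \<Omega> f = (\<integral>\<^sup>+ w\<in>\<Omega>. ennreal ((cmod (f w))\<^sup>2) \<partial>\<mu>)"

definition in_L2 :: "'b measure \<Rightarrow> 'b set \<Rightarrow> ('b \<Rightarrow> complex) \<Rightarrow> bool" where
  "in_L2 \<mu> \<Omega> f \<longleftrightarrow> f \<in> borel_measurable \<mu> \<and> L2_normsq \<mu> \<Omega> f < \<infinity>"

definition L2_inner :: "'b measure \<Rightarrow> 'b set \<Rightarrow> ('b \<Rightarrow> complex) \<Rightarrow> ('b \<Rightarrow> complex) \<Rightarrow> complex" where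
  "L2_inner \<mu> \<Omega> f h = (LINT w:\<Omega>|\<mu>. f w * cnj (h w))"

definition is_frame_L2 :: "'b measure \<Rightarrow> 'b set \<Rightarrow> 'j set \<Rightarrow> ('j \<Rightarrow> 'b \<Rightarrow> complex) \<Rightarrow> bool" where
  "is_frame_L2 \<mu> \<Omega> J \<phi> \<longleftrightarrow>
     (\<exists>A B::real. 0 < A \<and> A \<le> B \<and>
        (\<forall>f. in_L2 \<mu> \<Omega> f \<longrightarrow>
           ennreal A * L2_normsq \<mu> \<Omega> f
             \<le> (\<integral>\<^sup>+ j. ennreal ((cmod (L2_inner \<mu> \<Omega> f (\<phi> j)))\<^sup>2) \<partial>count_space J) \<and>
           (\<integral>\<^sup>+ j. ennreal ((cmod (L2_inner \<mu> \<Omega> f (\<phi> j)))\<^sup>2) \<partial>count_space J)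
             \<le> ennreal B * L2_normsq \<mu> \<Omega> f))"

end

theory Submission
  imports Defs
begin


lemma lin_kernel:
  fixes v :: "nat \<Rightarrow> nat \<Rightarrow> complex"
  shows "m < n \<Longrightarrow> \<exists>c. (\<exists>k<n. c k \<noteq> 0) \<and> (\<forall>j<m. (\<Sum>k<n. c k * v j k) = 0)"
proof (induction n arbitrary: m v)
  case 0 then show ?case by simp
next
  case (Suc n)
  show ?case
  proof (cases "\<forall>j<m. v j 0 = 0")
    case True
    define c :: "nat \<Rightarrow> complex" where "c = (\<lambda>k. if k = 0 then 1 else 0)"
    have "(\<Sum>k<Suc n. c k * v j k) = v j 0" for j
      by (simp only: sum.lessThan_Suc_shift) (simp add: c_def)
    then show ?thesis using True by (intro exI[of _ c]) (auto simp: c_def)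
  next
    case False
    then obtain j0 where j0: "j0 < m" "v j0 0 \<noteq> 0" by auto
    define \<sigma> where "\<sigma> = (\<lambda>j::nat. if j < j0 then j else Suc j)"
    define w where "w = (\<lambda>j k. v (\<sigma> j) (Suc k) - (v (\<sigma> j) 0 / v j0 0) * v j0 (Suc k))"
    have "m - 1 < n" using Suc.prems j0 by linarith
    from Suc.IH[OF this, of w] obtain c' where c': "\<exists>k<n. c' k \<noteq> 0"
      "\<forall>j<m-1. (\<Sum>k<n. c' k * w j k) = 0" by blast
    define S where "S = (\<Sum>k<n. c' k * v j0 (Suc k))"
    define c where "c = (\<lambda>k. if k = 0 then - S / v j0 0 else c' (k - 1))"
    have sumc: "(\<Sum>k<Suc n. c k * u k) = c 0 * u 0 + (\<Sum>k<n. c' k * u (Suc k))" for u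
      unfolding sum.lessThan_Suc_shift by (simp add: c_def)
    have "(\<Sum>k<Suc n. c k * v j k) = 0" if "j < m" for j
    proof (cases "j = j0")
      case True
      then show ?thesis using j0 by (simp only: sumc) (simp add: c_def S_def)
    next
      case False
      define j' where "j' = (if j < j0 then j else j - 1)"
      have sj: "\<sigma> j' = j" "j' < m - 1" using False that j0 by (auto simp: \<sigma>_def j'_def)
      have "(\<Sum>k<n. c' k * v j (Suc k)) = (\<Sum>k<n. c' k * w j' k) + (v j 0 / v j0 0) * S"
        unfolding w_def S_def sj(1) by (simp add: algebra_simps sum.distrib sum_distrib_left sum_subtractf)
      then show ?thesis using c'(2) sj(2) j0 by (simp only: sumc) (simp add: c_def field_simps)
    qed
    moreover have "\<exists>k<Suc n. c k \<noteq> 0"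
    proof -
      obtain k where "k < n" "c' k \<noteq> 0" using c'(1) by blast
      then show ?thesis by (intro exI[of _ "Suc k"]) (simp add: c_def)
    qed
    ultimately show ?thesis by blast
  qed
qed



lemma circle_sq:
  fixes z :: complex
  assumes z1: "cmod z = 1" and h: "\<And>n. cmod (z ^ (2 ^ n) - 1) < 1"
  shows "z = 1"
proof -
  have re: "Re w > 1/2" if "cmod w = 1" "cmod (w - 1) < 1" for w :: complex
  proof -
    have "(cmod (w - 1))^2 = (Re w - 1)^2 + (Im w)^2" by (simp add: cmod_power2)
    moreover have "(Re w)^2 + (Im w)^2 = 1" using that(1) by (metis cmod_power2 one_power2)
    moreover have "(cmod (w - 1))^2 < 1" using that(2) by (simp add: power_less_one_iff)
    ultimately show ?thesis by (auto simp: power2_eq_square algebra_simps)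
  qed
  have sq: "Re (w^2) = 2 * (Re w)^2 - 1" if "cmod w = 1" for w :: complex
  proof -
    have "(Re w)^2 + (Im w)^2 = 1" using that by (metis cmod_power2 one_power2)
    then show ?thesis by (simp add: power2_eq_square algebra_simps)
  qed
  have nz: "cmod (z ^ (2^n)) = 1" for n by (simp add: norm_power z1)
  have le1: "Re w \<le> 1" if "cmod w = 1" for w :: complex
    using complex_Re_le_cmod[of w] that by simp
  have key: "1 - Re (z ^ (2^n)) \<ge> 3^n * (1 - Re z)" for n
  proof (induction n)
    case 0 then show ?case by simp
  next
    case (Suc n)
    define t where "t = Re (z ^ (2^n))"
    have t1: "t > 1/2" unfolding t_def using re[OF nz h] .
    have t2: "t \<le> 1" unfolding t_def using le1[OF nz] .
    have "z ^ (2 ^ Suc n) = (z ^ (2^n))^2" by (simp add: power_mult[symmetric] mult.commute)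
    then have "Re (z ^ (2 ^ Suc n)) = 2 * t^2 - 1" using sq[OF nz] t_def by simp
    then have "1 - Re (z ^ (2 ^ Suc n)) = 2 * (1 - t) * (1 + t)" by (simp add: power2_eq_square algebra_simps)
    also have "\<dots> \<ge> 3 * (1 - t)"
    proof -
      have "2 * (1 - t) * (1 + t) - 3 * (1 - t) = (1 - t) * (2 * t - 1)" by (simp add: algebra_simps)
      moreover have "(1 - t) * (2 * t - 1) \<ge> 0" using t1 t2 by simp
      ultimately show ?thesis by linarith
    qed
    finally have "1 - Re (z ^ (2 ^ Suc n)) \<ge> 3 * (1 - t)" .
    moreover have "3 * (1 - t) \<ge> 3 * (3^n * (1 - Re z))" using Suc t_def by simp
    ultimately show ?case by simp
  qed
  have "Re z = 1"
  proof (rule ccontr)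
    assume "Re z \<noteq> 1"
    then have d: "1 - Re z > 0" using le1[OF z1] by simp
    obtain n :: nat where n: "real n > 1 / (1 - Re z)" using reals_Archimedean2 by blast
    have p3: "real k \<le> 3^k" for k :: nat
    proof (induction k)
      case 0 then show ?case by simp
    next
      case (Suc k)
      have "(3::real)^Suc k = 3 * 3^k" by simp
      moreover have "real (Suc k) = real k + 1" by simp
      ultimately show ?case using Suc one_le_power[of "3::real" k] by linarith
    qed
    have "real n \<le> 3^n" using p3 .
    then have "3^n * (1 - Re z) > 1" using n d by (smt (verit, ccfv_SIG) divide_less_eq mult_right_mono)
    moreover have "1 - Re (z ^ (2^n)) < 1/2" using re[OF nz h] by simp
    ultimately show False using key[of n] by simp
  qed
  moreover have "(Re z)^2 + (Im z)^2 = 1" using z1 by (metis cmod_power2 one_power2)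
  ultimately show ?thesis by (simp add: complex_eq_iff)
qed

context
  fixes e :: "'a::{topological_ab_group_add} \<Rightarrow> 'b::{topological_ab_group_add} \<Rightarrow> complex"
  assumes dp: "is_dual_pairing e"
begin

lemmas dp1 = dp[unfolded is_dual_pairing_def, THEN conjunct1]
lemmas dp2 = dp[unfolded is_dual_pairing_def, THEN conjunct2, THEN conjunct1]
lemmas dp3 = dp[unfolded is_dual_pairing_def, THEN conjunct2, THEN conjunct2, THEN conjunct1]
lemmas dp4 = dp[unfolded is_dual_pairing_def, THEN conjunct2, THEN conjunct2, THEN conjunct2]

lemma e_char: "is_character (\<lambda>g. e g w)"
  using dp1 by (rule spec)

lemma e_norm: "cmod (e g w) = 1"
  using e_char unfolding is_character_def by blast

lemma e_addl: "e (g + h) w = e g w * e h w"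
  using e_char unfolding is_character_def by blast

lemma e_addr: "e g (w + v) = e g w * e g v"
  using dp2 by blast

lemma e_contl: "continuous_on UNIV (\<lambda>g. e g w)"
  using e_char unfolding is_character_def by blast

lemma e_ne0: "e g w \<noteq> 0" using e_norm[of g w] by auto

lemma e_0r: "e g 0 = 1"
proof -
  have "e g 0 * e g 0 = e g 0" by (rule e_addr[of g 0 0, unfolded add_0_left, symmetric])
  then have "e g 0 * (e g 0 - 1) = 0" by (simp add: right_diff_distrib)
  then show ?thesis using e_ne0[of g 0] by simp
qed

lemma e_0l: "e 0 w = 1"
proof -
  have "e 0 w * e 0 w = e 0 w" by (rule e_addl[of 0 0 w, unfolded add_0_left, symmetric])
  then have "e 0 w * (e 0 w - 1) = 0" by (simp add: right_diff_distrib)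
  then show ?thesis using e_ne0[of 0 w] by simp
qed

lemma e_cnj_mult: "e g w * cnj (e g w) = 1"
proof -
  have "e g w * cnj (e g w) = complex_of_real ((cmod (e g w))^2)"
    by (rule complex_norm_square[symmetric])
  then show ?thesis using e_norm[of g w] by simp
qed

lemma e_cnj_mult': "cnj (e g w) * e g w = 1"
  using e_cnj_mult by (simp add: mult.commute)

lemma e_minusr: "e g (- w) = cnj (e g w)"
proof -
  have "e g w * e g (-w) = 1" using e_addr[of g w "-w", unfolded right_minus, symmetric] e_0r[of g] by simp
  then have "cnj (e g w) * (e g w * e g (-w)) = cnj (e g w)" by simp
  then show ?thesis by (simp add: mult.assoc[symmetric] e_cnj_mult')
qed

lemma e_diffr: "e g (w - v) = e g w * cnj (e g v)"
  using e_addr[of g w "-v"] e_minusr by simp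

lemma e_contr: "continuous_on UNIV (\<lambda>w. e g w)"
proof -
  have top: "open U \<longleftrightarrow> (\<forall>w0\<in>U. \<exists>K \<epsilon>. compact K \<and> \<epsilon> > 0 \<and>
            {w. \<forall>g\<in>K. cmod (e g w - e g w0) < \<epsilon>} \<subseteq> U)" for U :: "'b set"
    using dp4 by (rule spec)
  show ?thesis unfolding continuous_on_open_vimage[OF open_UNIV]
  proof (intro allI impI)
    fix B :: "complex set" assume B: "open B"
    show "open ((\<lambda>w. e g w) -` B \<inter> UNIV)"
      unfolding top
    proof
      fix w0 assume "w0 \<in> (\<lambda>w. e g w) -` B \<inter> UNIV"
      then have "e g w0 \<in> B" by simp
      then obtain \<epsilon> where \<epsilon>: "\<epsilon> > 0" "ball (e g w0) \<epsilon> \<subseteq> B" using B open_contains_ball by blast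
      show "\<exists>K \<epsilon>. compact K \<and> \<epsilon> > 0 \<and> {w. \<forall>g\<in>K. cmod (e g w - e g w0) < \<epsilon>} \<subseteq> (\<lambda>w. e g w) -` B \<inter> UNIV"
        apply (rule exI[of _ "{g}"], rule exI[of _ \<epsilon>])
        using \<epsilon> by (auto simp: dist_norm norm_minus_commute)
    qed
  qed
qed

lemma e_uniq: assumes "\<And>g. e g w = 1" shows "w = 0"
proof -
  have "is_character (\<lambda>g::'a. (1::complex))" using e_char[of 0] by (simp add: e_0r)
  then have "\<exists>!w. (\<lambda>g::'a. (1::complex)) = (\<lambda>g. e g w)" using dp3 by blast
  moreover have "(\<lambda>g::'a. (1::complex)) = (\<lambda>g. e g w)" "(\<lambda>g::'a. (1::complex)) = (\<lambda>g. e g 0)"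
    using assms by (auto simp: e_0r)
  ultimately show ?thesis by blast
qed

end


lemma countable_subsingleton: "(\<And>a b. a \<in> P \<Longrightarrow> b \<in> P \<Longrightarrow> a = b) \<Longrightarrow> countable P"
proof (cases "P = {}")
  case False
  assume h: "\<And>a b. a \<in> P \<Longrightarrow> b \<in> P \<Longrightarrow> a = b"
  then obtain a where "a \<in> P" using False by blast
  then have "P \<subseteq> {a}" using h by blast
  then show ?thesis by (rule countable_subset) simp
qed simp

lemma countable_translate_cover:
  fixes V :: "'b::{topological_group_add, second_countable_topology} set"
  assumes "open V" "0 \<in> V"
  shows "\<exists>X. countable X \<and> (\<forall>y. \<exists>x\<in>X. y - x \<in> V)"
proof -
  define F where "F = range (\<lambda>x. {y. y - x \<in> V})"
  have "open S" if "S \<in> F" for S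
  proof -
    obtain x where "S = {y. y - x \<in> V}" using \<open>S \<in> F\<close> F_def by blast
    moreover have "continuous_on UNIV (\<lambda>y. y - x)" by (intro continuous_intros)
    then have "open ((\<lambda>y. y - x) -` V \<inter> UNIV)" using assms(1) continuous_on_open_vimage[OF open_UNIV] by blast
    ultimately show ?thesis by (simp add: vimage_def)
  qed
  then obtain F' where F': "F' \<subseteq> F" "countable F'" "\<Union>F' = \<Union>F" using Lindelof by metis
  define X where "X = (\<lambda>S. SOME x. S = {y. y - x \<in> V}) ` F'"
  have "\<exists>x\<in>X. y - x \<in> V" for y
  proof -
    have "y \<in> {z. z - y \<in> V}" using assms(2) by simp
    then have "y \<in> \<Union>F" unfolding F_def by blast
    then obtain S where S: "S \<in> F'" "y \<in> S" using F'(3) by blast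
    then have "\<exists>x. S = {y. y - x \<in> V}" using F'(1) F_def by blast
    then have "S = {y. y - (SOME x. S = {y. y - x \<in> V}) \<in> V}" by (rule someI_ex)
    then show ?thesis using S unfolding X_def by blast
  qed
  moreover have "countable X" unfolding X_def using F'(2) by simp
  ultimately show ?thesis by blast
qed

context
  fixes e :: "'a::{topological_ab_group_add} \<Rightarrow> 'b::{topological_ab_group_add, second_countable_topology} \<Rightarrow> complex"
    and \<Lambda> :: "'a set"
  assumes dp: "is_dual_pairing e" and lat: "uniform_lattice \<Lambda>"
begin

lemma ann_0: "0 \<in> annihilator e \<Lambda>"
  by (simp add: annihilator_def e_0r[OF dp])

lemma ann_diff: "x \<in> annihilator e \<Lambda> \<Longrightarrow> y \<in> annihilator e \<Lambda> \<Longrightarrow> x - y \<in> annihilator e \<Lambda>"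
  by (simp add: annihilator_def e_diffr[OF dp])

lemma ann_e: "l \<in> \<Lambda> \<Longrightarrow> \<gamma> \<in> annihilator e \<Lambda> \<Longrightarrow> e l \<gamma> = 1"
  by (simp add: annihilator_def)

lemma U_exists: "\<exists>U. open U \<and> 0 \<in> U \<and> (\<forall>\<gamma>\<in>annihilator e \<Lambda>. \<gamma> \<in> U \<longrightarrow> \<gamma> = 0)"
proof -
  obtain K where K: "compact K" "{k + l | k l. k \<in> K \<and> l \<in> \<Lambda>} = UNIV"
    using lat[unfolded uniform_lattice_def, THEN conjunct2, THEN conjunct2, THEN conjunct2] by blast
  have Kne: "K \<noteq> {}"
  proof
    assume "K = {}"
    then have "{k + l | k l. k \<in> K \<and> l \<in> \<Lambda>} = {}" by simp
    then show False using K(2) by simp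
  qed
  define U where "U = {w. \<forall>g\<in>K. cmod (e g w - 1) < 1}"
  have "open U"
    unfolding dp4[OF dp, rule_format]
  proof
    fix w0 assume w0: "w0 \<in> U"
    have "continuous_on K (\<lambda>g. cmod (e g w0 - 1))"
      by (intro continuous_intros continuous_on_subset[OF e_contl[OF dp]]) auto
    then obtain g0 where g0: "g0 \<in> K" "\<And>g. g \<in> K \<Longrightarrow> cmod (e g w0 - 1) \<le> cmod (e g0 w0 - 1)"
      using continuous_attains_sup[OF K(1) Kne] by blast
    define r where "r = cmod (e g0 w0 - 1)"
    have r1: "r < 1" using w0 g0(1) unfolding U_def r_def by blast
    have "{w. \<forall>g\<in>K. cmod (e g w - e g w0) < 1 - r} \<subseteq> U"
    proof
      fix w assume w: "w \<in> {w. \<forall>g\<in>K. cmod (e g w - e g w0) < 1 - r}"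
      have "cmod (e g w - 1) < 1" if "g \<in> K" for g
      proof -
        have "cmod (e g w - 1) \<le> cmod (e g w - e g w0) + cmod (e g w0 - 1)"
          using norm_triangle_ineq[of "e g w - e g w0" "e g w0 - 1"] by simp
        moreover have "cmod (e g w - e g w0) < 1 - r" using w that by blast
        moreover have "cmod (e g w0 - 1) \<le> r" using g0(2)[OF that] r_def by simp
        ultimately show ?thesis by linarith
      qed
      then show "w \<in> U" unfolding U_def by blast
    qed
    then show "\<exists>K \<epsilon>. compact K \<and> \<epsilon> > 0 \<and> {w. \<forall>g\<in>K. cmod (e g w - e g w0) < \<epsilon>} \<subseteq> U"
      using K(1) r1 by (intro exI[of _ K] exI[of _ "1 - r"]) auto
  qed
  moreover have "0 \<in> U" unfolding U_def by (simp add: e_0r[OF dp])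
  moreover have "\<gamma> = 0" if \<gamma>: "\<gamma> \<in> annihilator e \<Lambda>" "\<gamma> \<in> U" for \<gamma>
  proof -
    have small: "cmod (e y \<gamma> - 1) < 1" for y
    proof -
      have "y \<in> {k + l | k l. k \<in> K \<and> l \<in> \<Lambda>}" unfolding K(2) by (rule UNIV_I)
      then obtain k l where kl: "y = k + l" "k \<in> K" "l \<in> \<Lambda>" by blast
      have "e y \<gamma> = e k \<gamma> * e l \<gamma>" unfolding kl(1) by (rule e_addl[OF dp])
      then have "e y \<gamma> = e k \<gamma>" using ann_e[OF kl(3) \<gamma>(1)] by simp
      then show ?thesis using \<gamma>(2) kl(2) unfolding U_def by simp
    qed
    have "e x \<gamma> = 1" for x
    proof -
      define d where "d n = ((\<lambda>y. y + y) ^^ n) x" for n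
      have dn: "e (d n) \<gamma> = (e x \<gamma>) ^ (2 ^ n)" for n
      proof (induction n)
        case 0 then show ?case by (simp add: d_def)
      next
        case (Suc n)
        have "d (Suc n) = d n + d n" by (simp add: d_def)
        then have "e (d (Suc n)) \<gamma> = e (d n) \<gamma> * e (d n) \<gamma>" by (simp add: e_addl[OF dp])
        also have "\<dots> = (e x \<gamma>) ^ (2 ^ Suc n)" using Suc by (simp add: power_add[symmetric] mult_2)
        finally show ?case .
      qed
      show ?thesis
      proof (rule circle_sq)
        show "cmod (e x \<gamma>) = 1" by (rule e_norm[OF dp])
        fix n show "cmod (e x \<gamma> ^ 2 ^ n - 1) < 1" unfolding dn[symmetric] by (rule small)
      qed
    qed
    then show ?thesis by (rule e_uniq[OF dp])
  qed
  ultimately show ?thesis by blast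
qed

lemma V_exists: "\<exists>V. open V \<and> 0 \<in> V \<and> (\<forall>v\<in>V. \<forall>v'\<in>V. v' - v \<in> annihilator e \<Lambda> \<longrightarrow> v' = v)"
proof -
  obtain U where U: "open U" "0 \<in> U" "\<And>\<gamma>. \<gamma>\<in>annihilator e \<Lambda> \<Longrightarrow> \<gamma> \<in> U \<Longrightarrow> \<gamma> = 0"
    using U_exists by blast
  have "continuous_on UNIV (\<lambda>p::'b\<times>'b. fst p - snd p)" by (intro continuous_intros)
  then have "open ((\<lambda>p::'b\<times>'b. fst p - snd p) -` U)"
    using U(1) continuous_on_open_vimage[OF open_UNIV] by auto
  moreover have "(0, 0) \<in> (\<lambda>p::'b\<times>'b. fst p - snd p) -` U" using U(2) by simp
  ultimately obtain A B where AB: "open A" "open B" "(0,0) \<in> A \<times> B" "A \<times> B \<subseteq> (\<lambda>p::'b\<times>'b. fst p - snd p) -` U"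
    by (rule open_prod_elim)
  have "v' = v" if "v \<in> A \<inter> B" "v' \<in> A \<inter> B" "v' - v \<in> annihilator e \<Lambda>" for v v'
  proof -
    have "(v', v) \<in> A \<times> B" using that by auto
    then have "v' - v \<in> U" using AB(4) by auto
    then have "v' - v = 0" using U(3) that(3) by blast
    then show ?thesis by simp
  qed
  then show ?thesis using AB by (intro exI[of _ "A \<inter> B"]) auto
qed

lemma ann_countable: "countable (annihilator e \<Lambda>)"
proof -
  obtain V where V: "open V" "0 \<in> V" "\<And>v v'. v\<in>V \<Longrightarrow> v'\<in>V \<Longrightarrow> v' - v \<in> annihilator e \<Lambda> \<Longrightarrow> v' = v"
    using V_exists by blast
  obtain X where X: "countable X" "\<And>y. \<exists>x\<in>X. y - x \<in> V"
    using countable_translate_cover[OF V(1,2)] by blast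
  have "annihilator e \<Lambda> \<subseteq> (\<Union>x\<in>X. annihilator e \<Lambda> \<inter> {y. y - x \<in> V})" using X(2) by blast
  moreover have "countable (annihilator e \<Lambda> \<inter> {y. y - x \<in> V})" for x
  proof (rule countable_subsingleton)
    fix a b assume ab: "a \<in> annihilator e \<Lambda> \<inter> {y. y - x \<in> V}" "b \<in> annihilator e \<Lambda> \<inter> {y. y - x \<in> V}"
    then have "(b - x) - (a - x) \<in> annihilator e \<Lambda>" using ann_diff by simp
    then have "b - x = a - x" using V(3) ab by blast
    then show "a = b" by simp
  qed
  moreover have "countable (\<Union>x\<in>X. annihilator e \<Lambda> \<inter> {y. y - x \<in> V})"
    using X(1) calculation(2) by blast
  ultimately show ?thesis by (meson countable_subset)
qed

end


context
  fixes \<mu> :: "'b::{topological_ab_group_add} measure"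
  assumes haar: "is_haar_measure \<mu>"
begin

lemmas haar1 = haar[unfolded is_haar_measure_def, THEN conjunct1]
lemmas haar4 = haar[unfolded is_haar_measure_def, THEN conjunct2, THEN conjunct2, THEN conjunct2]

lemma h_sets: "sets \<mu> = sets borel"
  by (rule haar1)

lemma h_space: "space \<mu> = UNIV"
  using sets_eq_imp_space_eq[OF h_sets] by simp

lemma h_meas: "measurable \<mu> N = measurable borel N"
  by (rule measurable_cong_sets[OF h_sets refl])

lemma h_inv: "A \<in> sets borel \<Longrightarrow> emeasure \<mu> ((\<lambda>y. x + y) ` A) = emeasure \<mu> A"
  using haar4 by blast

lemma transl_meas: "(\<lambda>y. y + x) \<in> measurable \<mu> \<mu>"
proof -
  have "continuous_on UNIV (\<lambda>y::'b. y + x)" by (intro continuous_intros)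
  then have "(\<lambda>y::'b. y + x) \<in> borel_measurable borel" by (rule borel_measurable_continuous_onI)
  then show ?thesis using measurable_cong_sets[OF h_sets h_sets] by simp
qed

lemma distr_transl: "distr \<mu> \<mu> (\<lambda>y. y + x) = \<mu>"
proof (rule measure_eqI)
  show "sets (distr \<mu> \<mu> (\<lambda>y. y + x)) = sets \<mu>" by simp
  fix A assume "A \<in> sets (distr \<mu> \<mu> (\<lambda>y. y + x))"
  then have A: "A \<in> sets \<mu>" by simp
  have "(\<lambda>y. y + x) -` A \<inter> space \<mu> = (\<lambda>y. - x + y) ` A"
    unfolding h_space by (force simp: image_iff algebra_simps)
  then show "emeasure (distr \<mu> \<mu> (\<lambda>y. y + x)) A = emeasure \<mu> A"
    using A h_inv[of A "- x"] by (simp add: emeasure_distr[OF transl_meas A] h_sets)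
qed

lemma integral_transl:
  fixes u :: "'b \<Rightarrow> 'c::{banach, second_countable_topology}"
  assumes "u \<in> borel_measurable \<mu>"
  shows "integral\<^sup>L \<mu> (\<lambda>y. u (y + x)) = integral\<^sup>L \<mu> u"
  using integral_distr[OF transl_meas[of x] assms] distr_transl by simp

lemma nn_integral_transl:
  assumes "u \<in> borel_measurable \<mu>"
  shows "(\<integral>\<^sup>+ y. u (y + x) \<partial>\<mu>) = integral\<^sup>N \<mu> u"
  using nn_integral_distr[OF transl_meas[of x]] assms distr_transl by simp

lemma emeasure_transl:
  assumes "A \<in> sets \<mu>"
  shows "emeasure \<mu> {y. y - x \<in> A} = emeasure \<mu> A"
proof -
  have "emeasure \<mu> A = emeasure (distr \<mu> \<mu> (\<lambda>y. y + (- x))) A" using distr_transl[of "-x"] by (simp only:)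
  also have "\<dots> = emeasure \<mu> ((\<lambda>y. y + (- x)) -` A \<inter> space \<mu>)"
    by (rule emeasure_distr[OF transl_meas assms])
  also have "(\<lambda>y. y + (- x)) -` A \<inter> space \<mu> = {y. y - x \<in> A}" by (auto simp: h_space)
  finally show ?thesis by simp
qed

lemma transl_set_meas: "A \<in> sets \<mu> \<Longrightarrow> {y. y - x \<in> A} \<in> sets \<mu>"
proof -
  assume A: "A \<in> sets \<mu>"
  have "(\<lambda>y. y + (- x)) -` A \<inter> space \<mu> \<in> sets \<mu>" by (rule measurable_sets[OF transl_meas A])
  moreover have "(\<lambda>y. y + (- x)) -` A \<inter> space \<mu> = {y. y - x \<in> A}" by (auto simp: h_space)
  ultimately show ?thesis by simp
qed

lemma integrable_bdd_ind:
  fixes u :: "'b \<Rightarrow> complex"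
  assumes "A \<in> sets \<mu>" "emeasure \<mu> A < \<infinity>" "u \<in> borel_measurable \<mu>" "\<And>y. cmod (u y) \<le> C"
  shows "integrable \<mu> (\<lambda>y. indicator A y * u y)"
proof (rule Bochner_Integration.integrable_bound[where f="\<lambda>y. indicator A y * C"])
  show "integrable \<mu> (\<lambda>y. indicator A y * C)"
    using assms(1,2) by (intro integrable_mult_left) simp
  show "(\<lambda>y. indicator A y * u y) \<in> borel_measurable \<mu>" using assms(1,3) by measurable
  show "AE y in \<mu>. cmod (indicator A y * u y) \<le> norm (indicator A y * C)"
  proof (rule AE_I2)
    fix y
    have "0 \<le> C" using assms(4)[of y] norm_ge_zero order_trans by blast
    then show "cmod (indicator A y * u y) \<le> norm (indicator A y * C)"
      using assms(4)[of y] by (auto simp: indicator_def norm_mult)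
  qed
qed

end


lemma e_contr_comp[continuous_intros]:
  assumes "is_dual_pairing e" "continuous_on S f"
  shows "continuous_on S (\<lambda>x. e g (f x))"
  using continuous_on_compose2[OF e_contr[OF assms(1), of g] assms(2)] by simp

lemma piece_null:
  fixes e :: "'a::{topological_ab_group_add} \<Rightarrow> 'b::{topological_ab_group_add, second_countable_topology} \<Rightarrow> complex"
    and \<mu> :: "'b measure" and \<Lambda> :: "'a set" and \<Omega> :: "'b set" and L :: nat and a :: "nat \<Rightarrow> 'a"
    and A B \<eta> :: real and x :: 'b and V :: "'b set" and gs :: "'b list" and qs :: "complex list" and k0 :: nat
  assumes dp: "is_dual_pairing e" and haar: "is_haar_measure \<mu>" and lat: "uniform_lattice \<Lambda>"
    and \<Omega>m: "\<Omega> \<in> sets borel" and \<Omega>fin: "emeasure \<mu> \<Omega> < \<infinity>" and Lpos: "0 < L"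
    and fr: "\<forall>f. in_L2 \<mu> \<Omega> f \<longrightarrow>
           ennreal A * L2_normsq \<mu> \<Omega> f
             \<le> (\<integral>\<^sup>+ j. ennreal ((cmod (L2_inner \<mu> \<Omega> f ((\<lambda>(j, l). e (a j + l)) j)))\<^sup>2) \<partial>count_space ({1..L} \<times> \<Lambda>)) \<and>
           (\<integral>\<^sup>+ j. ennreal ((cmod (L2_inner \<mu> \<Omega> f ((\<lambda>(j, l). e (a j + l)) j)))\<^sup>2) \<partial>count_space ({1..L} \<times> \<Lambda>))
             \<le> ennreal B * L2_normsq \<mu> \<Omega> f"
    and AB: "0 < A" "A \<le> B" and \<eta>: "0 < \<eta>" "real L * B * \<eta>\<^sup>2 < A / 4"
    and V: "open V" "\<And>v v'. v \<in> V \<Longrightarrow> v' \<in> V \<Longrightarrow> v' - v \<in> annihilator e \<Lambda> \<Longrightarrow> v' = v"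
    and gs: "set gs \<subseteq> annihilator e \<Lambda>" "distinct gs" "length gs = Suc L"
    and qs: "length qs = Suc L" "k0 < Suc L" "cmod (qs ! k0) \<ge> 1/2"
  defines "E \<equiv> {w. w - x \<in> V \<and> (\<forall>k<Suc L. w + gs ! k \<in> \<Omega>) \<and>
              (\<forall>j\<in>{1..L}. cmod (\<Sum>k<Suc L. qs ! k * cnj (e (a j) (w + gs ! k))) \<le> \<eta>)}"
  shows "E \<in> null_sets \<mu>"
proof -
  define \<Gamma> where "\<Gamma> = annihilator e \<Lambda>"
  define \<gamma> where "\<gamma> k = gs ! k" for k
  define q where "q k = qs ! k" for k
  define h where "h j w = (\<Sum>k<Suc L. q k * cnj (e (a j) (w + \<gamma> k)))" for j w
  have E_def': "E = {w. w - x \<in> V \<and> (\<forall>k<Suc L. w + \<gamma> k \<in> \<Omega>) \<and> (\<forall>j\<in>{1..L}. cmod (h j w) \<le> \<eta>)}"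
    unfolding E_def h_def \<gamma>_def q_def ..
  have \<gamma>\<Gamma>: "k < Suc L \<Longrightarrow> \<gamma> k \<in> \<Gamma>" for k using gs unfolding \<gamma>_def \<Gamma>_def by auto
  note hmeas = h_meas[OF haar]
  have sets\<mu>: "sets \<mu> = sets borel" by (rule h_sets[OF haar])
  have space\<mu>: "space \<mu> = UNIV" by (rule h_space[OF haar])
  have hcont: "continuous_on UNIV (h j)" for j
    unfolding h_def[abs_def]
    by (intro continuous_on_sum continuous_on_mult continuous_on_const continuous_on_cnj
        e_contr_comp[OF dp] continuous_on_add continuous_on_id)
  have econt: "continuous_on UNIV (e g)" for g using e_contr[OF dp] by simp
  have t\<Omega>: "{w. w + c \<in> \<Omega>} \<in> sets \<mu>" for c
    using transl_set_meas[OF haar, of \<Omega> "-c"] by (simp add: sets\<mu> \<Omega>m)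
  have t\<Omega>e: "emeasure \<mu> {w. w + c \<in> \<Omega>} = emeasure \<mu> \<Omega>" for c
    using emeasure_transl[OF haar, of \<Omega> "-c"] by (simp add: sets\<mu> \<Omega>m)
  have Em: "E \<in> sets \<mu>"
  proof -
    have 1: "{w. w - x \<in> V} \<in> sets \<mu>"
    proof -
      have "continuous_on UNIV (\<lambda>w::'b. w - x)" by (intro continuous_intros)
      then have "open ((\<lambda>w. w - x) -` V \<inter> UNIV)" using V(1) continuous_on_open_vimage[OF open_UNIV] by blast
      then have "open {w. w - x \<in> V}" by (simp add: vimage_def)
      then show ?thesis unfolding sets\<mu> by simp
    qed
    have 2: "(\<Inter>k\<in>{..<Suc L}. {w. w + \<gamma> k \<in> \<Omega>}) \<in> sets \<mu>"
      by (rule sets.finite_INT) (auto intro!: t\<Omega>)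
    have 3: "(\<Inter>j\<in>{1..L}. {w. cmod (h j w) \<le> \<eta>}) \<in> sets \<mu>"
    proof (rule sets.finite_INT)
      fix j
      have "closed {w. cmod (h j w) \<le> \<eta>}"
        by (rule closed_Collect_le) (intro continuous_on_norm hcont continuous_on_const)+
      then show "{w. cmod (h j w) \<le> \<eta>} \<in> sets \<mu>" unfolding sets\<mu> by simp
    qed (use Lpos in auto)
    have "E = {w. w - x \<in> V} \<inter> (\<Inter>k\<in>{..<Suc L}. {w. w + \<gamma> k \<in> \<Omega>}) \<inter> (\<Inter>j\<in>{1..L}. {w. cmod (h j w) \<le> \<eta>})"
      unfolding E_def' by auto
    then show ?thesis using 1 2 3 by simp
  qed
  have Efin: "emeasure \<mu> E < \<infinity>"
  proof -
    have "E \<subseteq> {w. w + \<gamma> 0 \<in> \<Omega>}" unfolding E_def' by auto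
    then have "emeasure \<mu> E \<le> emeasure \<mu> {w. w + \<gamma> 0 \<in> \<Omega>}"
      by (rule emeasure_mono) (rule t\<Omega>)
    also have "\<dots> = emeasure \<mu> \<Omega>" by (rule t\<Omega>e)
    finally show ?thesis using \<Omega>fin by simp
  qed
  have "emeasure \<mu> E = 0"
  proof (rule ccontr)
  assume E0: "emeasure \<mu> E \<noteq> 0"
  obtain m where m: "emeasure \<mu> E = ennreal m" "m > 0"
    using E0 Efin by (cases "emeasure \<mu> E") (auto simp: ennreal_less_zero_iff)
  define T where "T k = {y. y - \<gamma> k \<in> E}" for k
  have Tm: "T k \<in> sets \<mu>" for k unfolding T_def by (rule transl_set_meas[OF haar Em])
  have Tmeas: "emeasure \<mu> (T k) = emeasure \<mu> E" for k unfolding T_def by (rule emeasure_transl[OF haar Em])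
  have T\<Omega>: "k < Suc L \<Longrightarrow> T k \<subseteq> \<Omega>" for k
  proof
    fix y assume "k < Suc L" "y \<in> T k"
    then have "(y - \<gamma> k) + \<gamma> k \<in> \<Omega>" unfolding T_def E_def' by blast
    then show "y \<in> \<Omega>" by simp
  qed
  have Tdisj: "k < Suc L \<Longrightarrow> k' < Suc L \<Longrightarrow> y \<in> T k \<Longrightarrow> y \<in> T k' \<Longrightarrow> k = k'" for k k' y
  proof -
    assume kk: "k < Suc L" "k' < Suc L" and y: "y \<in> T k" "y \<in> T k'"
    have V1: "y - \<gamma> k - x \<in> V" and V2: "y - \<gamma> k' - x \<in> V" using y unfolding T_def E_def' by auto
    have "(y - \<gamma> k - x) - (y - \<gamma> k' - x) = \<gamma> k' - \<gamma> k" by (simp add: algebra_simps)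
    moreover have "\<gamma> k' - \<gamma> k \<in> \<Gamma>" using \<gamma>\<Gamma>[OF kk(1)] \<gamma>\<Gamma>[OF kk(2)] ann_diff[OF dp lat] unfolding \<Gamma>_def by blast
    ultimately have "y - \<gamma> k - x = y - \<gamma> k' - x" using V(2)[OF V2 V1] unfolding \<Gamma>_def by simp
    then have "gs ! k = gs ! k'" by (simp add: \<gamma>_def)
    then show "k = k'" using nth_eq_iff_index_eq[OF gs(2)] kk gs(3) by simp
  qed
  have cm: "continuous_on UNIV u \<Longrightarrow> u \<in> borel_measurable \<mu>" for u :: "'b \<Rightarrow> complex"
    unfolding hmeas by (rule borel_measurable_continuous_onI)
  have im: "S \<in> sets \<mu> \<Longrightarrow> continuous_on UNIV u \<Longrightarrow> (\<lambda>y. indicator S y * u y) \<in> borel_measurable \<mu>"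
    for S and u :: "'b \<Rightarrow> complex"
    by (intro borel_measurable_times borel_measurable_indicator cm)
  have ii: "S \<in> sets \<mu> \<Longrightarrow> emeasure \<mu> S < \<infinity> \<Longrightarrow> continuous_on UNIV u \<Longrightarrow> (\<And>y. cmod (u y) \<le> C)
      \<Longrightarrow> integrable \<mu> (\<lambda>y. indicator S y * u y)" for S C and u :: "'b \<Rightarrow> complex"
    by (rule integrable_bdd_ind[OF haar]) (auto intro: cm)
  have Tfin: "emeasure \<mu> (T k) < \<infinity>" for k using Tmeas Efin by simp
  have ec: "continuous_on UNIV (\<lambda>y. e g (y + c))" for g c
    by (intro e_contr_comp[OF dp] continuous_on_add continuous_on_id continuous_on_const)
  define f where "f y = (\<Sum>k<Suc L. q k * indicator (T k) y)" for y :: 'b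
  have fT: "f y = q k0" if y: "y \<in> T k0" for y
  proof -
    have "f y = q k0 * indicator (T k0) y + (\<Sum>k\<in>{..<Suc L} - {k0}. q k * indicator (T k) y)"
      unfolding f_def using qs(2) by (subst sum.remove[of _ k0]) auto
    moreover have "(\<Sum>k\<in>{..<Suc L} - {k0}. q k * indicator (T k) y) = 0"
      using Tdisj[OF _ qs(2) _ y] by (intro sum.neutral) (auto simp: indicator_def)
    ultimately show ?thesis using y by simp
  qed
  have f\<Omega>: "y \<notin> \<Omega> \<Longrightarrow> f y = 0" for y
    unfolding f_def using T\<Omega> by (intro sum.neutral) (auto simp: indicator_def)
  define M where "M = (\<Sum>k<Suc L. cmod (q k))"
  have fbd: "cmod (f y) \<le> M" for y
  proof -
    have "cmod (f y) \<le> (\<Sum>k<Suc L. cmod (q k * indicator (T k) y))" unfolding f_def by (rule norm_sum)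
    also have "\<dots> \<le> M" unfolding M_def by (intro sum_mono) (auto simp: indicator_def)
    finally show ?thesis .
  qed
  have fm: "f \<in> borel_measurable \<mu>"
    unfolding f_def[abs_def]
    by (intro borel_measurable_sum borel_measurable_times borel_measurable_const borel_measurable_indicator Tm)
  define g where "g j y = indicator (T 0) y * h j (y - \<gamma> 0) * e (a j) y" for j y
  have gm: "g j \<in> borel_measurable \<mu>" for j
  proof -
    have "continuous_on UNIV (\<lambda>y. h j (y - \<gamma> 0) * e (a j) y)"
      by (intro continuous_on_mult continuous_on_compose2[OF hcont] continuous_on_diff continuous_on_id
          continuous_on_const e_contr[OF dp]) auto
    from im[OF Tm this] show ?thesis unfolding g_def[abs_def] by (simp add: mult.assoc)
  qed
  have gbd: "cmod (g j y) \<le> \<eta> * indicator (T 0) y" if j: "j \<in> {1..L}" for j y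
  proof (cases "y \<in> T 0")
    case True
    then have "y - \<gamma> 0 \<in> E" unfolding T_def by simp
    then have "cmod (h j (y - \<gamma> 0)) \<le> \<eta>" using j unfolding E_def' by blast
    then show ?thesis using True by (simp add: g_def norm_mult e_norm[OF dp])
  qed (simp add: g_def)
  have g\<Omega>: "y \<notin> \<Omega> \<Longrightarrow> g j y = 0" for j y
    using T\<Omega>[of 0] by (auto simp: g_def indicator_def)
  have Nf_low: "ennreal (1/4) * emeasure \<mu> E \<le> L2_normsq \<mu> \<Omega> f"
  proof -
    have "ennreal (1/4) * emeasure \<mu> E = (\<integral>\<^sup>+ y \<in> T k0. ennreal (1/4) \<partial>\<mu>)"
      by (simp add: nn_integral_cmult_indicator[OF Tm] Tmeas)
    also have "\<dots> \<le> L2_normsq \<mu> \<Omega> f"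
      unfolding L2_normsq_def
    proof (rule nn_integral_mono)
      fix y
      show "ennreal (1/4) * indicator (T k0) y \<le> ennreal ((cmod (f y))\<^sup>2) * indicator \<Omega> y"
      proof (cases "y \<in> T k0")
        case True
        then have "y \<in> \<Omega>" using T\<Omega>[OF qs(2)] by blast
        moreover have "1/4 \<le> (cmod (f y))\<^sup>2"
        proof -
          have "(1/2::real)^2 \<le> (cmod (q k0))^2" using qs(3) unfolding q_def by (intro power_mono) auto
          then show ?thesis using fT[OF True] by (simp add: power2_eq_square)
        qed
        ultimately show ?thesis using True by (simp add: ennreal_leI)
      qed simp
    qed
    finally show ?thesis .
  qed
  have Nf_fin: "L2_normsq \<mu> \<Omega> f < \<infinity>"
  proof -
    have "L2_normsq \<mu> \<Omega> f \<le> (\<integral>\<^sup>+ y \<in> \<Omega>. ennreal (M\<^sup>2) \<partial>\<mu>)"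
      unfolding L2_normsq_def
    proof (rule nn_integral_mono)
      fix y
      have "(cmod (f y))\<^sup>2 \<le> M\<^sup>2" using fbd[of y] by (intro power_mono) auto
      then show "ennreal ((cmod (f y))\<^sup>2) * indicator \<Omega> y \<le> ennreal (M\<^sup>2) * indicator \<Omega> y"
        by (auto simp: indicator_def intro: ennreal_leI)
    qed
    also have "\<dots> = ennreal (M\<^sup>2) * emeasure \<mu> \<Omega>" by (rule nn_integral_cmult_indicator) (simp add: sets\<mu> \<Omega>m)
    also have "\<dots> < \<infinity>" using \<Omega>fin by (simp add: ennreal_mult_less_top)
    finally show ?thesis .
  qed
  have Ng: "L2_normsq \<mu> \<Omega> (g j) \<le> ennreal (\<eta>\<^sup>2) * emeasure \<mu> E" if j: "j \<in> {1..L}" for j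
  proof -
    have "L2_normsq \<mu> \<Omega> (g j) \<le> (\<integral>\<^sup>+ y \<in> T 0. ennreal (\<eta>\<^sup>2) \<partial>\<mu>)"
      unfolding L2_normsq_def
    proof (rule nn_integral_mono)
      fix y
      show "ennreal ((cmod (g j y))\<^sup>2) * indicator \<Omega> y \<le> ennreal (\<eta>\<^sup>2) * indicator (T 0) y"
      proof (cases "y \<in> T 0")
        case True
        have "(cmod (g j y))\<^sup>2 \<le> \<eta>\<^sup>2" using gbd[OF j, of y] True by (intro power_mono) auto
        then show ?thesis using True by (auto simp: indicator_def intro: ennreal_leI)
      next
        case False
        then show ?thesis by (simp add: g_def)
      qed
    qed
    also have "\<dots> = ennreal (\<eta>\<^sup>2) * emeasure \<mu> E" by (simp add: nn_integral_cmult_indicator[OF Tm] Tmeas)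
    finally show ?thesis .
  qed
  have fL2: "in_L2 \<mu> \<Omega> f" unfolding in_L2_def using fm Nf_fin by simp
  have gL2: "in_L2 \<mu> \<Omega> (g j)" if "j \<in> {1..L}" for j
    unfolding in_L2_def using gm Ng[OF that] Efin by (auto simp: ennreal_mult_less_top intro: le_less_trans)
  define I where "I j l = (\<integral> w. indicator E w * (cnj (e l w) * h j w) \<partial>\<mu>)" for j l
  have ephi: "e (a j + l) (w + \<gamma> k) = e l w * e (a j) (w + \<gamma> k)" if "l \<in> \<Lambda>" "k < Suc L" for j l w k
  proof -
    have "e (a j + l) (w + \<gamma> k) = e (a j) (w + \<gamma> k) * e l (w + \<gamma> k)" by (rule e_addl[OF dp])
    moreover have "e l (w + \<gamma> k) = e l w * e l (\<gamma> k)" by (rule e_addr[OF dp])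
    moreover have "e l (\<gamma> k) = 1" using ann_e[OF dp lat that(1)] \<gamma>\<Gamma>[OF that(2)] unfolding \<Gamma>_def by blast
    ultimately show ?thesis by simp
  qed
  have inner_f: "L2_inner \<mu> \<Omega> f (e (a j + l)) = I j l" if j: "j \<in> {1..L}" and l: "l \<in> \<Lambda>" for j l
  proof -
    have "L2_inner \<mu> \<Omega> f (e (a j + l)) = (\<integral> y. f y * cnj (e (a j + l) y) \<partial>\<mu>)"
      unfolding L2_inner_def set_lebesgue_integral_def
      by (rule Bochner_Integration.integral_cong) (auto simp: indicator_def f\<Omega>)
    also have "\<dots> = (\<integral> y. (\<Sum>k<Suc L. q k * (indicator (T k) y * cnj (e (a j + l) y))) \<partial>\<mu>)"
      by (intro Bochner_Integration.integral_cong refl) (simp only: f_def sum_distrib_right mult.assoc)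
    also have "\<dots> = (\<Sum>k<Suc L. (\<integral> y. q k * (indicator (T k) y * cnj (e (a j + l) y)) \<partial>\<mu>))"
      by (rule Bochner_Integration.integral_sum)
        (auto intro!: integrable_mult_right ii Tm Tfin continuous_on_cnj e_contr[OF dp] simp: e_norm[OF dp])
    also have "\<dots> = (\<Sum>k<Suc L. q k * (\<integral> y. indicator (T k) y * cnj (e (a j + l) y) \<partial>\<mu>))"
      by (simp only: integral_mult_right_zero)
    also have "\<dots> = (\<Sum>k<Suc L. q k * (\<integral> w. indicator E w * (cnj (e l w) * cnj (e (a j) (w + \<gamma> k))) \<partial>\<mu>))"
    proof (intro sum.cong refl arg_cong2[where f="(*)"])
      fix k assume k: "k \<in> {..<Suc L}"
      have "(\<integral> y. indicator (T k) y * cnj (e (a j + l) y) \<partial>\<mu>)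
          = (\<integral> w. indicator (T k) (w + \<gamma> k) * cnj (e (a j + l) (w + \<gamma> k)) \<partial>\<mu>)"
        by (rule integral_transl[OF haar, symmetric])
          (intro im Tm continuous_on_cnj e_contr[OF dp])
      also have "\<dots> = (\<integral> w. indicator E w * (cnj (e l w) * cnj (e (a j) (w + \<gamma> k))) \<partial>\<mu>)"
        using k by (intro Bochner_Integration.integral_cong refl) (simp add: ephi[OF l] T_def indicator_def)
      finally show "(\<integral> y. indicator (T k) y * cnj (e (a j + l) y) \<partial>\<mu>)
          = (\<integral> w. indicator E w * (cnj (e l w) * cnj (e (a j) (w + \<gamma> k))) \<partial>\<mu>)" .
    qed
    also have "\<dots> = (\<Sum>k<Suc L. (\<integral> w. q k * (indicator E w * (cnj (e l w) * cnj (e (a j) (w + \<gamma> k)))) \<partial>\<mu>))"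
      by (simp only: integral_mult_right_zero)
    also have "\<dots> = (\<integral> w. (\<Sum>k<Suc L. q k * (indicator E w * (cnj (e l w) * cnj (e (a j) (w + \<gamma> k))))) \<partial>\<mu>)"
      by (rule Bochner_Integration.integral_sum[symmetric])
        (auto intro!: integrable_mult_right ii Em Efin continuous_on_cnj continuous_on_mult e_contr[OF dp] ec
          simp: e_norm[OF dp] norm_mult)
    also have "\<dots> = I j l"
      unfolding I_def h_def
      by (intro Bochner_Integration.integral_cong refl) (simp add: sum_distrib_left algebra_simps)
    finally show ?thesis .
  qed
  have inner_g: "L2_inner \<mu> \<Omega> (g j) (e (a j + l)) = I j l" if j: "j \<in> {1..L}" and l: "l \<in> \<Lambda>" for j l
  proof -
    have "L2_inner \<mu> \<Omega> (g j) (e (a j + l)) = (\<integral> y. g j y * cnj (e (a j + l) y) \<partial>\<mu>)"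
      unfolding L2_inner_def set_lebesgue_integral_def
      by (rule Bochner_Integration.integral_cong) (auto simp: indicator_def g\<Omega>)
    also have "\<dots> = (\<integral> w. g j (w + \<gamma> 0) * cnj (e (a j + l) (w + \<gamma> 0)) \<partial>\<mu>)"
      by (rule integral_transl[OF haar, symmetric])
        (intro borel_measurable_times gm cm continuous_on_cnj e_contr[OF dp])
    also have "\<dots> = I j l"
      unfolding I_def
    proof (intro Bochner_Integration.integral_cong refl)
      fix w
      have "g j (w + \<gamma> 0) = indicator E w * h j w * e (a j) (w + \<gamma> 0)"
        by (simp add: g_def T_def indicator_def)
      moreover have "cnj (e (a j + l) (w + \<gamma> 0)) = cnj (e l w) * cnj (e (a j) (w + \<gamma> 0))"
        using ephi[OF l, of 0] by simp
      ultimately have "g j (w + \<gamma> 0) * cnj (e (a j + l) (w + \<gamma> 0))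
          = indicator E w * (cnj (e l w) * h j w) * (e (a j) (w + \<gamma> 0) * cnj (e (a j) (w + \<gamma> 0)))"
        by (simp add: algebra_simps)
      then show "g j (w + \<gamma> 0) * cnj (e (a j + l) (w + \<gamma> 0)) = indicator E w * (cnj (e l w) * h j w)"
        by (simp add: e_cnj_mult[OF dp])
    qed
    finally show ?thesis .
  qed
  define J where "J = {1..L} \<times> \<Lambda>"
  define FS where "FS u = (\<integral>\<^sup>+ p. ennreal ((cmod (L2_inner \<mu> \<Omega> u ((\<lambda>(j, l). e (a j + l)) p)))\<^sup>2) \<partial>count_space J)" for u
  have frl: "in_L2 \<mu> \<Omega> u \<Longrightarrow> ennreal A * L2_normsq \<mu> \<Omega> u \<le> FS u" for u
    using fr unfolding FS_def J_def by blast
  have fru: "in_L2 \<mu> \<Omega> u \<Longrightarrow> FS u \<le> ennreal B * L2_normsq \<mu> \<Omega> u" for u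
    using fr unfolding FS_def J_def by blast
  have "FS f \<le> (\<integral>\<^sup>+ p. (\<Sum>i\<in>{1..L}. ennreal ((cmod (L2_inner \<mu> \<Omega> (g i) ((\<lambda>(j, l). e (a j + l)) p)))\<^sup>2)) \<partial>count_space J)"
    unfolding FS_def
  proof (rule nn_integral_mono)
    fix p assume "p \<in> space (count_space J)"
    then obtain j l where p: "p = (j, l)" "j \<in> {1..L}" "l \<in> \<Lambda>" unfolding J_def by auto
    have "ennreal ((cmod (L2_inner \<mu> \<Omega> f ((\<lambda>(j, l). e (a j + l)) p)))\<^sup>2)
        = ennreal ((cmod (L2_inner \<mu> \<Omega> (g j) ((\<lambda>(j, l). e (a j + l)) p)))\<^sup>2)"
      using p by (simp add: inner_f inner_g)
    also have "\<dots> \<le> (\<Sum>i\<in>{1..L}. ennreal ((cmod (L2_inner \<mu> \<Omega> (g i) ((\<lambda>(j, l). e (a j + l)) p)))\<^sup>2))"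
      by (rule member_le_sum) (use p in auto)
    finally show "ennreal ((cmod (L2_inner \<mu> \<Omega> f ((\<lambda>(j, l). e (a j + l)) p)))\<^sup>2)
        \<le> (\<Sum>i\<in>{1..L}. ennreal ((cmod (L2_inner \<mu> \<Omega> (g i) ((\<lambda>(j, l). e (a j + l)) p)))\<^sup>2))" .
  qed
  also have "\<dots> = (\<Sum>i\<in>{1..L}. FS (g i))"
    unfolding FS_def by (rule nn_integral_sum) simp
  also have "\<dots> \<le> (\<Sum>i\<in>{1..L}. ennreal B * (ennreal (\<eta>\<^sup>2) * emeasure \<mu> E))"
  proof (rule sum_mono)
    fix i assume i: "i \<in> {1..L}"
    have "FS (g i) \<le> ennreal B * L2_normsq \<mu> \<Omega> (g i)" by (rule fru[OF gL2[OF i]])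
    also have "\<dots> \<le> ennreal B * (ennreal (\<eta>\<^sup>2) * emeasure \<mu> E)" by (intro mult_left_mono Ng[OF i]) simp
    finally show "FS (g i) \<le> ennreal B * (ennreal (\<eta>\<^sup>2) * emeasure \<mu> E)" .
  qed
  also have "\<dots> = ennreal (real L * (B * (\<eta>\<^sup>2 * m)))"
    using AB m(2) by (simp add: m(1) ennreal_mult[symmetric] ennreal_of_nat_eq_real_of_nat)
  finally have up: "FS f \<le> ennreal (real L * (B * (\<eta>\<^sup>2 * m)))" .
  have "ennreal (A * (1/4 * m)) = ennreal A * (ennreal (1/4) * emeasure \<mu> E)"
    using AB m(2) by (simp only: m(1) ennreal_mult[symmetric] mult_nonneg_nonneg)
  also have "\<dots> \<le> ennreal A * L2_normsq \<mu> \<Omega> f" by (intro mult_left_mono Nf_low) simp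
  also have "\<dots> \<le> FS f" by (rule frl[OF fL2])
  finally have "ennreal (A * (1/4 * m)) \<le> ennreal (real L * (B * (\<eta>\<^sup>2 * m)))" using up by simp
  then have "A * (1/4 * m) \<le> real L * (B * (\<eta>\<^sup>2 * m))"
    using AB m(2) by (subst (asm) ennreal_le_iff) auto
  then have "(A / 4) * m \<le> (real L * B * \<eta>\<^sup>2) * m" by (simp add: algebra_simps)
  then have "A / 4 \<le> real L * B * \<eta>\<^sup>2" using m(2) by simp
  then show False using \<eta>(2) by simp
qed
  then show ?thesis using Em by (rule null_setsI)
qed

lemma F_eq: "F_count \<Omega> \<Gamma> w = emeasure (count_space \<Gamma>) {\<gamma>\<in>\<Gamma>. w + \<gamma> \<in> \<Omega>}"
proof -
  have "F_count \<Omega> \<Gamma> w = (\<integral>\<^sup>+ \<gamma>. indicator {\<gamma>\<in>\<Gamma>. w + \<gamma> \<in> \<Omega>} \<gamma> \<partial>count_space \<Gamma>)"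
    unfolding F_count_def by (rule nn_integral_cong) (auto simp: indicator_def)
  also have "\<dots> = emeasure (count_space \<Gamma>) {\<gamma>\<in>\<Gamma>. w + \<gamma> \<in> \<Omega>}"
    by (rule nn_integral_indicator) auto
  finally show ?thesis .
qed

lemma F_vals: "F_count \<Omega> \<Gamma> w = \<infinity> \<or> (\<exists>k::nat. F_count \<Omega> \<Gamma> w = of_nat k)"
  unfolding F_eq by (auto simp: emeasure_count_space)

lemma F_meas:
  fixes \<Omega> \<Gamma> :: "'b::topological_monoid_add set"
  assumes "countable \<Gamma>" "\<Omega> \<in> sets borel"
  shows "F_count \<Omega> \<Gamma> \<in> borel_measurable borel"
proof -
  have ind: "(\<lambda>w. indicator \<Omega> (w + \<gamma>) :: ennreal) \<in> borel_measurable borel" for \<gamma>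
  proof (rule borel_measurable_indicator')
    have "continuous_on UNIV (\<lambda>w::'b. w + \<gamma>)" by (intro continuous_intros)
    then have "(\<lambda>w::'b. w + \<gamma>) \<in> borel_measurable borel" by (rule borel_measurable_continuous_onI)
    from measurable_sets[OF this assms(2)] show "{w \<in> space borel. w + \<gamma> \<in> \<Omega>} \<in> sets borel"
      by (simp add: vimage_def Collect_conj_eq[symmetric])
  qed
  show ?thesis
  proof (cases "finite \<Gamma>")
    case True
    have "F_count \<Omega> \<Gamma> = (\<lambda>w. \<Sum>\<gamma>\<in>\<Gamma>. indicator \<Omega> (w + \<gamma>))"
      unfolding F_count_def[abs_def] using True by (simp add: nn_integral_count_space_finite)
    then show ?thesis by (simp add: borel_measurable_sum ind)
  next
    case False
    note bij = bij_betw_from_nat_into[OF assms(1) False]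
    have "F_count \<Omega> \<Gamma> = (\<lambda>w. \<Sum>n. indicator \<Omega> (w + from_nat_into \<Gamma> n))"
      unfolding F_count_def[abs_def]
      by (simp add: nn_integral_bij_count_space[symmetric, OF bij] nn_integral_count_space_nat)
    then show ?thesis using ind by (simp add: borel_measurable_suminf_order)
  qed
qed

lemma esssup_nat:
  fixes F :: "'x \<Rightarrow> ennreal"
  assumes Fm: "F \<in> borel_measurable M" and AE: "AE w in M. F w \<le> of_nat L"
    and \<Omega>: "\<Omega> \<in> sets M" "emeasure M \<Omega> > 0" "\<And>w. w \<in> \<Omega> \<Longrightarrow> F w \<ge> 1"
    and vals: "\<And>w. F w = \<infinity> \<or> (\<exists>k::nat. F w = of_nat k)"
  shows "\<exists>m::nat. 0 < m \<and> m \<le> L \<and> esssup M F = of_nat m"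
proof -
  define s where "s = esssup M F"
  have sL: "s \<le> of_nat L" unfolding s_def using Fm AE by (rule esssup_I)
  have s1: "1 \<le> s"
  proof (rule ccontr)
    assume "\<not> 1 \<le> s"
    then have s1: "s < 1" by simp
    have "AE w in M. F w \<le> s" unfolding s_def by (rule esssup_AE)
    then have "AE w in M. \<not> w \<in> \<Omega>"
      by eventually_elim (use \<Omega>(3) s1 in \<open>metis not_le order_less_le_trans\<close>)
    then have "emeasure M {w\<in>space M. w \<in> \<Omega>} = 0" by (rule emeasure_eq_0_AE)
    moreover have "{w\<in>space M. w \<in> \<Omega>} = \<Omega>" using sets.sets_into_space[OF \<Omega>(1)] by blast
    ultimately show False using \<Omega>(2) by simp
  qed
  define K where "K = {k. k \<le> L \<and> of_nat k \<le> s}"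
  define m where "m = Max K"
  have "(1::ennreal) \<le> of_nat L" using s1 sL by (rule order_trans)
  then have "1 \<le> L" by (metis of_nat_1 of_nat_le_iff)
  then have K: "finite K" "1 \<in> K" unfolding K_def using s1 by auto
  then have mK: "m \<in> K" unfolding m_def by (intro Max_in) auto
  have m1: "1 \<le> m" unfolding m_def using K by (rule Max_ge)
  have "s \<le> of_nat m"
    unfolding s_def
  proof (rule esssup_I[OF Fm])
    have "AE w in M. F w \<le> s" unfolding s_def by (rule esssup_AE)
    then show "AE w in M. F w \<le> of_nat m"
    proof eventually_elim
      fix w assume w: "F w \<le> s"
      show "F w \<le> of_nat m"
      proof (cases "F w = \<infinity>")
        case True then show ?thesis using w sL by (simp add: top_unique)
      next
        case False
        then obtain k where k: "F w = of_nat k" using vals by blast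
        have "of_nat k \<le> s" using w k by simp
        then have "of_nat k \<le> (of_nat L :: ennreal)" using sL by (rule order_trans)
        then have "k \<le> L" by (metis of_nat_le_iff)
        then have "k \<in> K" unfolding K_def using w k by simp
        then have "k \<le> m" unfolding m_def by (rule Max_ge[OF K(1)])
        then show ?thesis using k by simp
      qed
    qed
  qed
  moreover have "of_nat m \<le> s" using mK unfolding K_def by simp
  ultimately have "esssup M F = of_nat m" unfolding s_def by simp
  moreover have "m \<le> L" using mK unfolding K_def by simp
  ultimately show ?thesis using m1 by (intro exI[of _ m]) auto
qed


lemma rat_dense_complex:
  assumes "0 < \<epsilon>"
  shows "\<exists>d\<in>(\<lambda>(p, r). Complex (of_rat p) (of_rat r)) ` (UNIV :: (rat \<times> rat) set). cmod (d - z) < \<epsilon>"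
proof -
  obtain x where x: "x \<in> \<rat>" "Re z - \<epsilon>/2 < x" "x < Re z + \<epsilon>/2"
    using Rats_dense_in_real[of "Re z - \<epsilon>/2" "Re z + \<epsilon>/2"] assms by auto
  obtain y where y: "y \<in> \<rat>" "Im z - \<epsilon>/2 < y" "y < Im z + \<epsilon>/2"
    using Rats_dense_in_real[of "Im z - \<epsilon>/2" "Im z + \<epsilon>/2"] assms by auto
  obtain p where p: "x = of_rat p" using x(1) Rats_cases by blast
  obtain r where r: "y = of_rat r" using y(1) Rats_cases by blast
  have "cmod (Complex x y - z) \<le> \<bar>Re (Complex x y - z)\<bar> + \<bar>Im (Complex x y - z)\<bar>" by (rule cmod_le)
  also have "\<dots> < \<epsilon>" using x y by (simp add: abs_less_iff)
  finally have "cmod (Complex x y - z) < \<epsilon>" .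
  then show ?thesis using p r by (intro bexI[of _ "Complex x y"]) auto
qed

theorem theorem1:
  fixes e :: "'a::{topological_ab_group_add, t2_space, second_countable_topology}
              \<Rightarrow> 'b::{topological_ab_group_add, t2_space, second_countable_topology} \<Rightarrow> complex"
    and \<mu> :: "'b measure"
    and \<Lambda> :: "'a set"
    and \<Omega> :: "'b set"
    and L :: nat
    and a :: "nat \<Rightarrow> 'a"
  assumes "lca_group TYPE('a)"
    and "is_dual_pairing e"
    and "is_haar_measure \<mu>"
    and "uniform_lattice \<Lambda>"
    and "\<Omega> \<in> sets borel"
    and "0 < emeasure \<mu> \<Omega>" and "emeasure \<mu> \<Omega> < \<infinity>"
    and "0 < L"
    and "is_frame_L2 \<mu> \<Omega> ({1..L} \<times> \<Lambda>) (\<lambda>(j, l). e (a j + l))"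
  shows "\<exists>m::nat. 0 < m \<and> m \<le> L \<and> subtiling_pair \<mu> m \<Omega> (annihilator e \<Lambda>)"
proof -
  note dp = assms(2) and haar = assms(3) and lat = assms(4) and \<Omega>m = assms(5)
    and \<Omega>pos = assms(6) and \<Omega>fin = assms(7) and Lpos = assms(8)
  define \<Gamma> where "\<Gamma> = annihilator e \<Lambda>"
  have \<Gamma>c: "countable \<Gamma>" unfolding \<Gamma>_def by (rule ann_countable[OF dp lat])
  have sets\<mu>: "sets \<mu> = sets borel" by (rule h_sets[OF haar])
  have space\<mu>: "space \<mu> = UNIV" by (rule h_space[OF haar])
  have Fm: "F_count \<Omega> \<Gamma> \<in> borel_measurable \<mu>"
    unfolding h_meas[OF haar] by (rule F_meas[OF \<Gamma>c \<Omega>m])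
  obtain A B where AB: "0 < A" "A \<le> B" and fr: "\<forall>f. in_L2 \<mu> \<Omega> f \<longrightarrow>
           ennreal A * L2_normsq \<mu> \<Omega> f
             \<le> (\<integral>\<^sup>+ j. ennreal ((cmod (L2_inner \<mu> \<Omega> f ((\<lambda>(j, l). e (a j + l)) j)))\<^sup>2) \<partial>count_space ({1..L} \<times> \<Lambda>)) \<and>
           (\<integral>\<^sup>+ j. ennreal ((cmod (L2_inner \<mu> \<Omega> f ((\<lambda>(j, l). e (a j + l)) j)))\<^sup>2) \<partial>count_space ({1..L} \<times> \<Lambda>))
             \<le> ennreal B * L2_normsq \<mu> \<Omega> f"
    using assms(9) unfolding is_frame_L2_def by (elim exE conjE) blast
  define \<eta> where "\<eta> = sqrt (A / (8 * real L * B))"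
  have Bpos: "0 < B" using AB by simp
  have \<eta>: "0 < \<eta>" "real L * B * \<eta>\<^sup>2 < A / 4"
  proof -
    have q: "0 < A / (8 * real L * B)" using AB Bpos Lpos by simp
    then show "0 < \<eta>" unfolding \<eta>_def by simp
    have "\<eta>\<^sup>2 = A / (8 * real L * B)" unfolding \<eta>_def using q by simp
    then have "real L * B * \<eta>\<^sup>2 = A / 8" using Bpos Lpos by (simp add: field_simps)
    then show "real L * B * \<eta>\<^sup>2 < A / 4" using AB by simp
  qed
  define \<delta> where "\<delta> = min (1/2) (\<eta> / real (Suc L))"
  have \<delta>3: "real (Suc L) * \<delta> \<le> \<eta>"
  proof -
    have "real (Suc L) * \<delta> \<le> real (Suc L) * (\<eta> / real (Suc L))"
      by (intro mult_left_mono) (auto simp: \<delta>_def)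
    also have "\<dots> = \<eta>" by simp
    finally show ?thesis .
  qed
  have \<delta>1: "0 < \<delta>" unfolding \<delta>_def using \<eta>(1) by simp
  have \<delta>2: "\<delta> \<le> 1/2" unfolding \<delta>_def by (rule min.cobounded1)
  note \<delta> = \<delta>1 \<delta>2 \<delta>3
  obtain V where V: "open V" "0 \<in> V" "\<forall>v\<in>V. \<forall>v'\<in>V. v' - v \<in> annihilator e \<Lambda> \<longrightarrow> v' = v"
    using V_exists[OF dp lat] by blast
  have V3: "\<And>v v'. v \<in> V \<Longrightarrow> v' \<in> V \<Longrightarrow> v' - v \<in> annihilator e \<Lambda> \<Longrightarrow> v' = v" using V(3) by blast
  obtain X where X: "countable X" "\<And>y. \<exists>x\<in>X. y - x \<in> V"
    using countable_translate_cover[OF V(1,2)] by blast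
  define D where "D = (\<lambda>(p, r). Complex (of_rat p) (of_rat r)) ` (UNIV :: (rat \<times> rat) set)"
  have Dc: "countable D" unfolding D_def by simp
  define T where "T = {gs. set gs \<subseteq> \<Gamma> \<and> distinct gs \<and> length gs = Suc L}"
  define Q where "Q = {qs. set qs \<subseteq> D \<and> length qs = Suc L \<and> (\<exists>k0<Suc L. cmod (qs ! k0) \<ge> 1/2)}"
  define E where "E x gs qs = {w. w - x \<in> V \<and> (\<forall>k<Suc L. w + gs ! k \<in> \<Omega>) \<and>
              (\<forall>j\<in>{1..L}. cmod (\<Sum>k<Suc L. qs ! k * cnj (e (a j) (w + gs ! k))) \<le> \<eta>)}" for x gs qs
  have Enull: "E x gs qs \<in> null_sets \<mu>" if gq: "gs \<in> T" "qs \<in> Q" for x gs qs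
  proof -
    obtain k0 where k0: "k0 < Suc L" "cmod (qs ! k0) \<ge> 1/2" using gq(2) unfolding Q_def by blast
    show ?thesis unfolding E_def
      by (rule piece_null[OF dp haar lat \<Omega>m \<Omega>fin Lpos fr AB \<eta> V(1) V3, of gs qs k0])
        (use gq k0 in \<open>auto simp: T_def Q_def \<Gamma>_def\<close>)
  qed
  define N where "N = (\<Union>x\<in>X. \<Union>gs\<in>T. \<Union>qs\<in>Q. E x gs qs)"
  have Tc: "countable T" using countable_lists[OF \<Gamma>c] by (rule countable_subset[rotated]) (auto simp: T_def)
  have Qc: "countable Q" using countable_lists[OF Dc] by (rule countable_subset[rotated]) (auto simp: Q_def)
  have Nnull: "N \<in> null_sets \<mu>"
    unfolding N_def using X(1) Tc Qc Enull by (intro null_sets_UN') auto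
  have cover: "{w \<in> space \<mu>. \<not> F_count \<Omega> \<Gamma> w \<le> of_nat L} \<subseteq> N"
  proof
    fix w assume "w \<in> {w \<in> space \<mu>. \<not> F_count \<Omega> \<Gamma> w \<le> of_nat L}"
    then have w: "\<not> F_count \<Omega> \<Gamma> w \<le> of_nat L" by simp
    define S where "S = {\<gamma>\<in>\<Gamma>. w + \<gamma> \<in> \<Omega>}"
    have FS: "F_count \<Omega> \<Gamma> w = emeasure (count_space \<Gamma>) S" unfolding S_def by (rule F_eq)
    obtain Bs where Bs: "finite Bs" "card Bs = Suc L" "Bs \<subseteq> S"
    proof (cases "finite S")
      case True
      then have "F_count \<Omega> \<Gamma> w = of_nat (card S)" unfolding FS by (simp add: emeasure_count_space S_def)
      then have "Suc L \<le> card S" using w by simp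
      then show ?thesis using that by (metis obtain_subset_with_card_n)
    next
      case False
      then show ?thesis using that infinite_arbitrarily_large by blast
    qed
    obtain gs where gs: "set gs = Bs" "distinct gs" using finite_distinct_list[OF Bs(1)] by blast
    have gsl: "length gs = Suc L" using distinct_card[OF gs(2)] gs(1) Bs(2) by simp
    have gsT: "gs \<in> T" unfolding T_def using gs gsl Bs(3) S_def by auto
    have gsk: "k < Suc L \<Longrightarrow> w + gs ! k \<in> \<Omega>" for k
      using nth_mem[of k gs] gsl gs(1) Bs(3) S_def by auto
    obtain x where x: "x \<in> X" "w - x \<in> V" using X(2) by blast
    obtain c where c: "\<exists>k<Suc L. c k \<noteq> 0"
        "\<forall>j<L. (\<Sum>k<Suc L. c k * cnj (e (a (Suc j)) (w + gs ! k))) = 0"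
      using lin_kernel[of L "Suc L" "\<lambda>j k. cnj (e (a (Suc j)) (w + gs ! k))"] by auto
    obtain k0 where k0: "k0 < Suc L" "c k0 \<noteq> 0" using c(1) by blast
    define c' where "c' k = c k / c k0" for k
    have c'1: "c' k0 = 1" unfolding c'_def using k0 by simp
    have c'0: "(\<Sum>k<Suc L. c' k * cnj (e (a (Suc j)) (w + gs ! k))) = 0" if "j < L" for j
    proof -
      have "(\<Sum>k<Suc L. c' k * cnj (e (a (Suc j)) (w + gs ! k)))
          = (\<Sum>k<Suc L. c k * cnj (e (a (Suc j)) (w + gs ! k))) / c k0"
        unfolding c'_def sum_divide_distrib by (intro sum.cong refl) (simp add: field_simps)
      then show ?thesis using c(2) that by simp
    qed
    have "\<forall>k. \<exists>d. d \<in> D \<and> cmod (d - c' k) < \<delta>"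
      using rat_dense_complex[OF \<delta>(1)] unfolding D_def by blast
    then obtain d where d: "\<And>k. d k \<in> D" "\<And>k. cmod (d k - c' k) < \<delta>" by metis
    define qs where "qs = map d [0..<Suc L]"
    have qsk: "k < Suc L \<Longrightarrow> qs ! k = d k" for k unfolding qs_def
      by (simp only: nth_map length_upt nth_upt) simp
    have "qs \<in> Q"
    proof -
      have "cmod (c' k0) \<le> cmod (d k0) + cmod (d k0 - c' k0)"
        using norm_triangle_ineq4[of "d k0" "d k0 - c' k0"] by simp
      then have "1/2 \<le> cmod (qs ! k0)" using c'1 d(2)[of k0] \<delta>(2) qsk[OF k0(1)] by simp
      then show ?thesis unfolding Q_def qs_def using d(1) k0(1) by auto
    qed
    moreover have "w \<in> E x gs qs"
    proof -
      have "cmod (\<Sum>k<Suc L. qs ! k * cnj (e (a j) (w + gs ! k))) \<le> \<eta>" if j: "j \<in> {1..L}" for j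
      proof -
        obtain j' where j': "j = Suc j'" "j' < L" using j by (cases j) auto
        have "(\<Sum>k<Suc L. qs ! k * cnj (e (a j) (w + gs ! k)))
            = (\<Sum>k<Suc L. (d k - c' k) * cnj (e (a j) (w + gs ! k))) + (\<Sum>k<Suc L. c' k * cnj (e (a j) (w + gs ! k)))"
          by (simp add: qsk sum.distrib[symmetric] algebra_simps)
        also have "(\<Sum>k<Suc L. c' k * cnj (e (a j) (w + gs ! k))) = 0" using c'0[OF j'(2)] j'(1) by simp
        finally have "cmod (\<Sum>k<Suc L. qs ! k * cnj (e (a j) (w + gs ! k)))
            = cmod (\<Sum>k<Suc L. (d k - c' k) * cnj (e (a j) (w + gs ! k)))" by simp
        also have "\<dots> \<le> (\<Sum>k<Suc L. cmod ((d k - c' k) * cnj (e (a j) (w + gs ! k))))" by (rule norm_sum)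
        also have "\<dots> \<le> (\<Sum>k<Suc L. \<delta>)"
          using d(2) by (intro sum_mono) (simp add: norm_mult e_norm[OF dp] less_imp_le)
        also have "\<dots> = real (Suc L) * \<delta>" by simp
        also have "\<dots> \<le> \<eta>" by (rule \<delta>(3))
        finally show ?thesis .
      qed
      then show ?thesis unfolding E_def using x(2) gsk by blast
    qed
    ultimately show "w \<in> N" unfolding N_def using x(1) gsT by blast
  qed
  have AE: "AE w in \<mu>. F_count \<Omega> \<Gamma> w \<le> of_nat L" by (rule AE_I'[OF Nnull cover])
  have F1: "1 \<le> F_count \<Omega> \<Gamma> w" if "w \<in> \<Omega>" for w
  proof -
    have "0 \<in> \<Gamma>" unfolding \<Gamma>_def by (rule ann_0[OF dp lat])
    then have "(\<lambda>\<gamma>. indicator \<Omega> (w + \<gamma>) :: ennreal) 0 \<le> F_count \<Omega> \<Gamma> w"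
      unfolding F_count_def by (rule nn_integral_ge_point)
    then show ?thesis using that by simp
  qed
  obtain m :: nat where m: "0 < m" "m \<le> L" "esssup \<mu> (F_count \<Omega> \<Gamma>) = of_nat m"
    using esssup_nat[OF Fm AE _ \<Omega>pos F1 F_vals] \<Omega>m sets\<mu> by auto
  then show ?thesis unfolding subtiling_pair_def \<Gamma>_def[symmetric] by blast
qed


end
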